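(* Let $m$ be a positive integer, $\lambda\in\mathbb{R}$ with $|\lambda-m|<1/10$, $R=\sqrt\lambda$, $w=(0,2)$. If $v\in V_2$ satisfies $B:=|\langle v,w\rangle|\ge R^{1/3}$, then, as $R\to\infty$, $$|S_w(v)|\ll\frac{\log^2 B}{B^2},$$ with an absolute implied constant.
   Context: For $v\in\mathbb{Z}^2$, $c(v)=\frac{1}{|v|^2-\lambda}$ and $C(v,w)=c(v)c(v+w)$. $V_2=\{v\in\mathbb{Z}^2: C(v,w)<0,\ |v|^2\ne m,\ |v+w|^2\ne m,\ \sqrt R/2\le|\langle v,w\rangle|\le3R\}$. $\operatorname{Nbr}_w(v)=\{C(v-w,w)+C(v,w),\ C(v,w)+C(v+w,w)\}$ and $S_w(v)$ is the element of $\operatorname{Nbr}_w(v)$ of smallest absolute value (the smaller one in case of a tie). *)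

theory Defs
  imports Complex_Main
begin

definition vadd :: "int \<times> int \<Rightarrow> int \<times> int \<Rightarrow> int \<times> int" where
  "vadd v w = (fst v + fst w, snd v + snd w)"

definition vsub :: "int \<times> int \<Rightarrow> int \<times> int \<Rightarrow> int \<times> int" where
  "vsub v w = (fst v - fst w, snd v - snd w)"

definition normsq :: "int \<times> int \<Rightarrow> int" where
  "normsq v = (fst v)^2 + (snd v)^2"

definition zinner :: "int \<times> int \<Rightarrow> int \<times> int \<Rightarrow> int" where
  "zinner v w = fst v * fst w + snd v * snd w"

definition cfun :: "real \<Rightarrow> int \<times> int \<Rightarrow> real" where
  "cfun lam v = 1 / (real_of_int (normsq v) - lam)"

definition Cfun :: "real \<Rightarrow> int \<times> int \<Rightarrow> int \<times> int \<Rightarrow> real" where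
  "Cfun lam v w = cfun lam v * cfun lam (vadd v w)"

definition V2 :: "real \<Rightarrow> int \<Rightarrow> int \<times> int \<Rightarrow> (int \<times> int) set" where
  "V2 lam m w = {v. Cfun lam v w < 0 \<and> normsq v \<noteq> m \<and> normsq (vadd v w) \<noteq> m \<and>
      sqrt (sqrt lam) / 2 \<le> \<bar>real_of_int (zinner v w)\<bar> \<and>
      \<bar>real_of_int (zinner v w)\<bar> \<le> 3 * sqrt lam}"

definition Nbr :: "real \<Rightarrow> int \<times> int \<Rightarrow> int \<times> int \<Rightarrow> real set" where
  "Nbr lam w v = {Cfun lam (vsub v w) w + Cfun lam v w, Cfun lam v w + Cfun lam (vadd v w) w}"

definition Sw :: "real \<Rightarrow> int \<times> int \<Rightarrow> int \<times> int \<Rightarrow> real" where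
  "Sw lam w v =
     (let a = Cfun lam (vsub v w) w + Cfun lam v w;
          b = Cfun lam v w + Cfun lam (vadd v w) w
      in if \<bar>a\<bar> < \<bar>b\<bar> then a else if \<bar>b\<bar> < \<bar>a\<bar> then b else min a b)"

end

theory Submission
  imports Defs
begin

lemma bnd:
  fixes N z P b :: real
  assumes "\<bar>N\<bar> \<le> 12*\<bar>z\<bar>" "P \<ge> b^2" "z \<noteq> 0" "b \<noteq> 0"
  shows "\<bar>N\<bar> / (\<bar>z\<bar>*P) \<le> 16/b^2"
proof -
  have bp: "b^2 > 0" using assms by simp
  have Pp: "P > 0" using assms bp by linarith
  have "\<bar>N\<bar> * b^2 \<le> (12*\<bar>z\<bar>) * P" using assms(1,2) bp by (intro mult_mono) auto
  also have "\<dots> \<le> 16*(\<bar>z\<bar>*P)" using Pp by (simp add: mult_right_mono)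
  finally show ?thesis using bp Pp assms(3) by (simp add: divide_simps mult.commute)
qed

lemma fr: "x\<noteq>0 \<Longrightarrow> d\<noteq>0 \<Longrightarrow> y\<noteq>0 \<Longrightarrow> 1/d*(1/x)+1/x*(1/y) = (y+d)/(x*(d*y::real))"
  by (simp add: field_simps)
lemma fr2: "x\<noteq>0 \<Longrightarrow> y\<noteq>0 \<Longrightarrow> d\<noteq>0 \<Longrightarrow> 1/x*(1/y)+1/y*(1/d) = (d+x)/(y*(x*d::real))"
  by (simp add: field_simps)

lemma core:
  fixes x b :: real
  assumes xy: "x*(x+4*b+4) < 0" and hx: "\<bar>x\<bar> \<ge> 9/10" and hy: "\<bar>x+4*b+4\<bar> \<ge> 9/10"
    and hb: "\<bar>b\<bar> \<ge> 15"
  shows "\<bar>1/(x-4*b+4) * (1/x) + 1/x * (1/(x+4*b+4))\<bar> \<le> 16/b^2 \<or>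
         \<bar>1/x * (1/(x+4*b+4)) + 1/(x+4*b+4) * (1/(x+4*b+4+4*b+12))\<bar> \<le> 16/b^2"
proof -
  define y where "y = x+4*b+4"
  have x0: "x \<noteq> 0" and y0: "y \<noteq> 0" using hx hy y_def by auto
  have b0: "b \<noteq> 0" using hb by auto
  have sgn: "(x < 0 \<and> 0 < y) \<or> (0 < x \<and> y < 0)" using xy y_def
    by (metis mult_pos_pos mult_neg_neg linorder_neqE_linordered_idom x0 y0 less_irrefl order.asym)
  have EA: "1/(x-4*b+4) * (1/x) + 1/x * (1/y) = (2*x+8)/(x*((x-4*b+4)*y))" if "x-4*b+4 \<noteq> 0"
    using fr[OF x0 that y0] by (simp add: y_def algebra_simps)
  have EB: "1/x * (1/y) + 1/y * (1/(y+4*b+12)) = (2*y+8)/(y*(x*(y+4*b+12)))" if "y+4*b+12 \<noteq> 0"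
    using fr2[OF x0 y0 that] by (simp add: y_def algebra_simps)
  have NA: "\<bar>2*x+8\<bar> \<le> 12*\<bar>x\<bar>" using hx by linarith
  have NB: "\<bar>2*y+8\<bar> \<le> 12*\<bar>y\<bar>" using hy y_def by linarith
  have "\<bar>1/(x-4*b+4) * (1/x) + 1/x * (1/y)\<bar> \<le> 16/b^2 \<or>
        \<bar>1/x * (1/y) + 1/y * (1/(y+4*b+12))\<bar> \<le> 16/b^2"
  proof (cases "b > 0")
    case True
    hence b15: "b \<ge> 15" using hb by linarith
    have bb: "15*b \<le> b*b" using b15 by (simp add: mult_right_mono)
    have s: "x < 0" "0 < y" using sgn y_def b15 by auto
    show ?thesis
    proof (cases "y \<ge> -x")
      case True
      have D: "\<bar>x-4*b+4\<bar> \<ge> 4*b-4" "\<bar>y\<bar> \<ge> 2*b+2" using s True y_def b15 by auto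
      have "(4*b-4)*(2*b+2) \<le> \<bar>x-4*b+4\<bar>*\<bar>y\<bar>" using D b15 by (intro mult_mono) auto
      moreover have "b^2 \<le> (4*b-4)*(2*b+2)" proof - have "(4*b-4)*(2*b+2) = 8*(b*b)-8" by (simp add: algebra_simps) thus ?thesis using bb b15 unfolding power2_eq_square by linarith qed
      ultimately have P: "b^2 \<le> \<bar>x-4*b+4\<bar>*\<bar>y\<bar>" by linarith
      have "x-4*b+4 \<noteq> 0" using D b15 by auto
      then show ?thesis using bnd[OF NA P x0 b0] EA by (simp add: abs_mult abs_divide)
    next
      case False
      have D: "\<bar>x\<bar> \<ge> 2*b+2" "\<bar>y+4*b+12\<bar> \<ge> 4*b" using s False y_def b15 by auto
      have "(2*b+2)*(4*b) \<le> \<bar>x\<bar>*\<bar>y+4*b+12\<bar>" using D b15 by (intro mult_mono) auto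
      moreover have "b^2 \<le> (2*b+2)*(4*b)" proof - have "(2*b+2)*(4*b) = 8*(b*b)+8*b" by (simp add: algebra_simps) thus ?thesis using bb b15 unfolding power2_eq_square by linarith qed
      ultimately have P: "b^2 \<le> \<bar>x\<bar>*\<bar>y+4*b+12\<bar>" by linarith
      have "y+4*b+12 \<noteq> 0" using D b15 by auto
      then show ?thesis using bnd[OF NB P y0 b0] EB by (simp add: abs_mult abs_divide)
    qed
  next
    case False
    define c where "c = -b"
    hence c15: "c \<ge> 15" using hb False by linarith
    have cc: "15*c \<le> c*c" using c15 by (simp add: mult_right_mono)
    have bc: "b*b = c*c" using c_def by simp
    have s: "0 < x" "y < 0" using sgn y_def c15 c_def by auto
    show ?thesis
    proof (cases "x \<le> -y")
      case True
      have D: "\<bar>x-4*b+4\<bar> \<ge> 4*c" "\<bar>y\<bar> \<ge> 2*c-2" using s True y_def c15 c_def by auto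
      have "(4*c)*(2*c-2) \<le> \<bar>x-4*b+4\<bar>*\<bar>y\<bar>" using D c15 by (intro mult_mono) auto
      moreover have "b^2 \<le> (4*c)*(2*c-2)" proof - have "(4*c)*(2*c-2) = 8*(c*c)-8*c" by (simp add: algebra_simps) thus ?thesis using cc c15 bc unfolding power2_eq_square by linarith qed
      ultimately have P: "b^2 \<le> \<bar>x-4*b+4\<bar>*\<bar>y\<bar>" by linarith
      have "x-4*b+4 \<noteq> 0" using D c15 by auto
      then show ?thesis using bnd[OF NA P x0 b0] EA by (simp add: abs_mult abs_divide)
    next
      case False
      have D: "\<bar>x\<bar> \<ge> 2*c-2" "\<bar>y+4*b+12\<bar> \<ge> 4*c-12" using s False y_def c15 c_def by auto
      have "(2*c-2)*(4*c-12) \<le> \<bar>x\<bar>*\<bar>y+4*b+12\<bar>" using D c15 by (intro mult_mono) auto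
      moreover have "b^2 \<le> (2*c-2)*(4*c-12)" proof - have "(2*c-2)*(4*c-12) = 8*(c*c)-32*c+24" by (simp add: algebra_simps) thus ?thesis using cc c15 bc unfolding power2_eq_square by linarith qed
      ultimately have P: "b^2 \<le> \<bar>x\<bar>*\<bar>y+4*b+12\<bar>" by linarith
      have "y+4*b+12 \<noteq> 0" using D c15 by auto
      then show ?thesis using bnd[OF NB P y0 b0] EB by (simp add: abs_mult abs_divide)
    qed
  qed
  then show ?thesis using y_def by (simp add: algebra_simps)
qed

lemma Sw_le:
  fixes a b :: real
  shows "\<bar>(if \<bar>a\<bar> < \<bar>b\<bar> then a else if \<bar>b\<bar> < \<bar>a\<bar> then b else min a b)\<bar> \<le> \<bar>a\<bar> \<and>
         \<bar>(if \<bar>a\<bar> < \<bar>b\<bar> then a else if \<bar>b\<bar> < \<bar>a\<bar> then b else min a b)\<bar> \<le> \<bar>b\<bar>"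
  by (auto simp: min_def)

lemma int_far:
  fixes n m :: int and lam :: real
  assumes "n \<noteq> m" "\<bar>lam - real_of_int m\<bar> < 1/10"
  shows "\<bar>real_of_int n - lam\<bar> \<ge> 9/10"
proof -
  have "\<bar>real_of_int n - real_of_int m\<bar> \<ge> 1"
  proof -
    have "\<bar>n - m\<bar> \<ge> 1" using assms(1) by linarith
    thus ?thesis by (metis of_int_1_le_iff of_int_abs of_int_diff)
  qed
  thus ?thesis using assms(2) by linarith
qed

theorem lemma5p4:
  "\<exists>K::real. \<exists>R0::real. \<forall>(m::int) (lam::real) (v::int \<times> int).
     m \<ge> 1 \<longrightarrow> \<bar>lam - real_of_int m\<bar> < 1/10 \<longrightarrow> sqrt lam \<ge> R0 \<longrightarrow>
     v \<in> V2 lam m (0, 2) \<longrightarrow>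
     \<bar>real_of_int (zinner v (0, 2))\<bar> \<ge> root 3 (sqrt lam) \<longrightarrow>
     \<bar>Sw lam (0, 2) v\<bar> \<le> K * (ln \<bar>real_of_int (zinner v (0, 2))\<bar>)^2
                              / (real_of_int (zinner v (0, 2)))^2"
proof (intro exI allI impI)
  fix m :: int and lam :: real and v :: "int \<times> int"
  assume hm: "m \<ge> 1" and hl: "\<bar>lam - real_of_int m\<bar> < 1/10" and hR: "sqrt lam \<ge> 27000"
    and hv: "v \<in> V2 lam m (0, 2)" and hB: "\<bar>real_of_int (zinner v (0, 2))\<bar> \<ge> root 3 (sqrt lam)"
  obtain p q where v: "v = (p, q)" by (cases v)
  define b where "b = real_of_int q"
  define x where "x = real_of_int (normsq v) - lam"
  have xe: "x = real_of_int (normsq v) - lam" by (simp add: x_def)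
  have zi: "real_of_int (zinner v (0, 2)) = 2*b" using v b_def by (simp add: zinner_def)
  have "root 3 (sqrt lam) \<ge> root 3 27000" by (rule real_root_le_mono) (use hR in auto)
  moreover have "root 3 (27000::real) = 30" by (rule real_root_pos_unique) auto
  ultimately have B30: "\<bar>2*b\<bar> \<ge> 30" using hB zi by linarith
  hence hb: "\<bar>b\<bar> \<ge> 15" by linarith
  have ny: "real_of_int (normsq (vadd v (0,2))) - lam = x+4*b+4"
    using v by (simp add: x_def b_def normsq_def vadd_def power2_eq_square algebra_simps)
  have nz: "real_of_int (normsq (vadd (vadd v (0,2)) (0,2))) - lam = x+4*b+4+4*b+12"
    using v by (simp add: x_def b_def normsq_def vadd_def power2_eq_square algebra_simps)
  have nu: "real_of_int (normsq (vsub v (0,2))) - lam = x-4*b+4"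
    using v by (simp add: x_def b_def normsq_def vsub_def power2_eq_square algebra_simps)
  have vsa: "vadd (vsub v (0,2)) (0,2) = v" using v by (simp add: vadd_def vsub_def)
  from hv have C: "Cfun lam v (0,2) < 0" and n1: "normsq v \<noteq> m" and n2: "normsq (vadd v (0,2)) \<noteq> m"
    by (auto simp: V2_def)
  have hx: "\<bar>x\<bar> \<ge> 9/10" using int_far[OF n1 hl] x_def by simp
  have hy: "\<bar>x+4*b+4\<bar> \<ge> 9/10" using int_far[OF n2 hl] ny by simp
  have Ce: "Cfun lam v (0,2) = 1/x * (1/(x+4*b+4))" using ny by (simp add: Cfun_def cfun_def x_def)
  have xy: "x*(x+4*b+4) < 0"
  proof -
    have "1/(x*(x+4*b+4)) < 0" using C Ce by simp
    thus ?thesis by (simp add: divide_less_0_iff)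
  qed
  have S: "Sw lam (0,2) v = (let a = 1/(x-4*b+4) * (1/x) + 1/x * (1/(x+4*b+4));
          b = 1/x * (1/(x+4*b+4)) + 1/(x+4*b+4) * (1/(x+4*b+4+4*b+12))
      in if \<bar>a\<bar> < \<bar>b\<bar> then a else if \<bar>b\<bar> < \<bar>a\<bar> then b else min a b)"
    unfolding Sw_def Cfun_def cfun_def vsa by (simp only: nu ny nz xe[symmetric])
  have bound: "\<bar>Sw lam (0,2) v\<bar> \<le> 16/b^2"
    using core[OF xy hx hy hb] Sw_le unfolding S Let_def by (meson order_trans)
  have "exp 1 \<le> \<bar>2*b\<bar>" using exp_le B30 by linarith
  hence "ln (exp 1) \<le> ln \<bar>2*b\<bar>" by (subst ln_le_cancel_iff) auto
  hence l1: "1 \<le> ln \<bar>2*b\<bar>" by simp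
  hence l2: "1 \<le> (ln \<bar>2*b\<bar>)^2" by (simp add: one_le_power)
  have b2: "b^2 > 0" using hb by auto
  have "16/b^2 \<le> 16*(ln \<bar>2*b\<bar>)^2/b^2" using l2 b2 by (simp add: divide_right_mono)
  also have "\<dots> = 64 * (ln \<bar>2*b\<bar>)^2 / (2*b)^2" by (simp add: power_mult_distrib)
  finally show "\<bar>Sw lam (0, 2) v\<bar> \<le> 64 * (ln \<bar>real_of_int (zinner v (0, 2))\<bar>)^2
                              / (real_of_int (zinner v (0, 2)))^2"
    using bound zi by simp
qed

end
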